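(* Let $G\in\mathfrak D_4$ and let $\Upsilon\subseteq G$ be a subgraph isomorphic to the Mycielski–Grötzsch graph, with vertices labelled $a_j,b_j$ ($j\in\mathbb Z/5\mathbb Z$), $c$ as below. If $i\in\mathbb Z/5\mathbb Z$ and $q\in V(G)$ is adjacent to both $a_{i-1}$ and $a_{i+1}$, then $q$ is adjacent to $a_i$.
   Context: $\mathfrak D_4$ is the class of (finite) maximal triangle-free graphs satisfying property $\mathscr{D}_4$. Maximal triangle-free: no triangle, and adding any new edge creates a triangle. Property $\mathscr{D}_k$: for every $m\in\{1,\dots,k\}$ and every sequence $x_1,\dots,x_{3m}$ of (not necessarily distinct) vertices there is a vertex $y$ with $|\{i\in[3m]: x_iy\in E(G)\}|\ge m+1$. Mycielski–Grötzsch graph: vertices $a_j,b_j$ ($j\in\mathbb Z/5\mathbb Z$) and $c$; its edges are exactly all pairs $a_jc$, $a_jb_{j+2}$, $a_jb_{j-2}$, $b_jb_{j+2}$. *)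

theory Defs
  imports Main "HOL-Library.Numeral_Type"
begin

definition simple_graph :: "'v set \<Rightarrow> ('v \<Rightarrow> 'v \<Rightarrow> bool) \<Rightarrow> bool" where
  "simple_graph V E \<longleftrightarrow> finite V \<and> (\<forall>x y. E x y \<longrightarrow> x \<in> V \<and> y \<in> V)
     \<and> (\<forall>x y. E x y \<longrightarrow> E y x) \<and> (\<forall>x. \<not> E x x)"

definition triangle_free :: "'v set \<Rightarrow> ('v \<Rightarrow> 'v \<Rightarrow> bool) \<Rightarrow> bool" where
  "triangle_free V E \<longleftrightarrow> \<not> (\<exists>x\<in>V. \<exists>y\<in>V. \<exists>z\<in>V. E x y \<and> E y z \<and> E x z)"

definition maximal_triangle_free :: "'v set \<Rightarrow> ('v \<Rightarrow> 'v \<Rightarrow> bool) \<Rightarrow> bool" where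
  "maximal_triangle_free V E \<longleftrightarrow> simple_graph V E \<and> triangle_free V E \<and>
     (\<forall>x\<in>V. \<forall>y\<in>V. x \<noteq> y \<and> \<not> E x y \<longrightarrow> (\<exists>z\<in>V. E x z \<and> E z y))"

definition property_D :: "nat \<Rightarrow> 'v set \<Rightarrow> ('v \<Rightarrow> 'v \<Rightarrow> bool) \<Rightarrow> bool" where
  "property_D k V E \<longleftrightarrow> (\<forall>m \<in> {1..k}. \<forall>x :: nat \<Rightarrow> 'v. (\<forall>i\<in>{1..3*m}. x i \<in> V) \<longrightarrow>
     (\<exists>y\<in>V. card {i \<in> {1..3*m}. E (x i) y} \<ge> m + 1))"

definition in_frak_D4 :: "'v set \<Rightarrow> ('v \<Rightarrow> 'v \<Rightarrow> bool) \<Rightarrow> bool" where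
  "in_frak_D4 V E \<longleftrightarrow> maximal_triangle_free V E \<and> property_D 4 V E"

text \<open>Vertices a, b (indexed by Z/5Z, the type 5) and c of G span a (not necessarily induced) subgraph
  isomorphic to the Mycielski-Groetzsch graph with this labelling: the 11 vertices are distinct
  vertices of G, and all edges a_j c, a_j b_{j+2}, a_j b_{j-2}, b_j b_{j+2} are edges of G.\<close>
definition mycielski_copy :: "'v set \<Rightarrow> ('v \<Rightarrow> 'v \<Rightarrow> bool) \<Rightarrow> (5 \<Rightarrow> 'v) \<Rightarrow> (5 \<Rightarrow> 'v) \<Rightarrow> 'v \<Rightarrow> bool" where
  "mycielski_copy V E a b c \<longleftrightarrow>
     inj a \<and> inj b \<and> range a \<inter> range b = {} \<and> c \<notin> range a \<and> c \<notin> range b \<and>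
     range a \<subseteq> V \<and> range b \<subseteq> V \<and> c \<in> V \<and>
     (\<forall>j. E (a j) c \<and> E (a j) (b (j + 2)) \<and> E (a j) (b (j - 2)) \<and> E (b j) (b (j + 2)))"

end

theory Submission
  imports Defs
begin

lemma int_ite: "int (if P then 1 else 0) = (if P then 1 else 0)" by simp

lemma M9_int:
  fixes a0 a1 a4 b1 b2 b3 b4 q z :: bool
  assumes "4 \<le> (if a0 then 1 else 0) + ((if a1 then 1 else 0) + ((if a4 then 1 else 0) + ((if b1 then 1 else 0) + ((if b2 then 1 else 0) + ((if b3 then 1 else 0) + ((if b4 then 1 else 0) + ((if q then 1 else 0) + ((if z then 1 else (0::int))))))))))"
   "\<not> (a0 \<and> b2)" "\<not> (a0 \<and> b3)" "\<not> (a1 \<and> b3)" "\<not> (a1 \<and> b4)" "\<not> (a4 \<and> b1)" "\<not> (a4 \<and> b2)" "\<not> (b1 \<and> b3)" "\<not> (b2 \<and> b4)" "\<not> (b4 \<and> b1)" "\<not> (q \<and> a1)" "\<not> (q \<and> a4)" "\<not> (q \<and> z)" "\<not> (z \<and> a0)"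
  shows "(a1 \<and> b1 \<and> b2 \<and> z) \<or> (a4 \<and> b3 \<and> b4 \<and> z)"
  using assms by (smt (z3))

lemma M9:
  fixes a0 a1 a4 b1 b2 b3 b4 q z :: bool
  assumes "4 \<le> (if a0 then 1 else 0) + ((if a1 then 1 else 0) + ((if a4 then 1 else 0) + ((if b1 then 1 else 0) + ((if b2 then 1 else 0) + ((if b3 then 1 else 0) + ((if b4 then 1 else 0) + ((if q then 1 else 0) + ((if z then 1 else (0::nat))))))))))"
   "\<not> (a0 \<and> b2)" "\<not> (a0 \<and> b3)" "\<not> (a1 \<and> b3)" "\<not> (a1 \<and> b4)" "\<not> (a4 \<and> b1)" "\<not> (a4 \<and> b2)" "\<not> (b1 \<and> b3)" "\<not> (b2 \<and> b4)" "\<not> (b4 \<and> b1)" "\<not> (q \<and> a1)" "\<not> (q \<and> a4)" "\<not> (q \<and> z)" "\<not> (z \<and> a0)"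
  shows "(a1 \<and> b1 \<and> b2 \<and> z) \<or> (a4 \<and> b3 \<and> b4 \<and> z)"
proof -
  have "(4::int) \<le> int ((if a0 then 1 else 0) + ((if a1 then 1 else 0) + ((if a4 then 1 else 0) + ((if b1 then 1 else 0) + ((if b2 then 1 else 0) + ((if b3 then 1 else 0) + ((if b4 then 1 else 0) + ((if q then 1 else 0) + ((if z then 1 else (0::nat)))))))))))" using assms(1) by linarith
  then have "(4::int) \<le> (if a0 then 1 else 0) + ((if a1 then 1 else 0) + ((if a4 then 1 else 0) + ((if b1 then 1 else 0) + ((if b2 then 1 else 0) + ((if b3 then 1 else 0) + ((if b4 then 1 else 0) + ((if q then 1 else 0) + ((if z then 1 else (0::int))))))))))" by (simp only: of_nat_add int_ite)
  from M9_int[OF this assms(2-)] show ?thesis .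
qed

lemma A12_int:
  fixes e1 e2 e3 e4 e5 e6 e7 e8 e9 e10 e11 e12 :: bool
  assumes "5 \<le> (if e1 then 1 else 0) + ((if e2 then 1 else 0) + ((if e3 then 1 else 0) + ((if e4 then 1 else 0) + ((if e5 then 1 else 0) + ((if e6 then 1 else 0) + ((if e7 then 1 else 0) + ((if e8 then 1 else 0) + ((if e9 then 1 else 0) + ((if e10 then 1 else 0) + ((if e11 then 1 else 0) + ((if e12 then 1 else (0::int)))))))))))))"
   "\<not> (e2 \<and> e1)" "\<not> (e3 \<and> e1)" "\<not> (e4 \<and> e1)" "\<not> (e5 \<and> e1)" "\<not> (e2 \<and> e8)" "\<not> (e2 \<and> e9)" "\<not> (e3 \<and> e9)" "\<not> (e4 \<and> e6)" "\<not> (e4 \<and> e7)" "\<not> (e5 \<and> e7)" "\<not> (e5 \<and> e8)" "\<not> (e6 \<and> e8)" "\<not> (e7 \<and> e9)" "\<not> (e9 \<and> e6)" "\<not> (e10 \<and> e3)" "\<not> (e10 \<and> e5)" "\<not> (e10 \<and> e11)" "\<not> (e11 \<and> e2)" "\<not> (e3 \<and> e12)" "\<not> (e7 \<and> e12)" "\<not> (e8 \<and> e12)" "\<not> (e11 \<and> e12)"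
  shows "False"
  using assms by (smt (z3))

lemma A12:
  fixes e1 e2 e3 e4 e5 e6 e7 e8 e9 e10 e11 e12 :: bool
  assumes "5 \<le> (if e1 then 1 else 0) + ((if e2 then 1 else 0) + ((if e3 then 1 else 0) + ((if e4 then 1 else 0) + ((if e5 then 1 else 0) + ((if e6 then 1 else 0) + ((if e7 then 1 else 0) + ((if e8 then 1 else 0) + ((if e9 then 1 else 0) + ((if e10 then 1 else 0) + ((if e11 then 1 else 0) + ((if e12 then 1 else (0::nat)))))))))))))"
   "\<not> (e2 \<and> e1)" "\<not> (e3 \<and> e1)" "\<not> (e4 \<and> e1)" "\<not> (e5 \<and> e1)" "\<not> (e2 \<and> e8)" "\<not> (e2 \<and> e9)" "\<not> (e3 \<and> e9)" "\<not> (e4 \<and> e6)" "\<not> (e4 \<and> e7)" "\<not> (e5 \<and> e7)" "\<not> (e5 \<and> e8)" "\<not> (e6 \<and> e8)" "\<not> (e7 \<and> e9)" "\<not> (e9 \<and> e6)" "\<not> (e10 \<and> e3)" "\<not> (e10 \<and> e5)" "\<not> (e10 \<and> e11)" "\<not> (e11 \<and> e2)" "\<not> (e3 \<and> e12)" "\<not> (e7 \<and> e12)" "\<not> (e8 \<and> e12)" "\<not> (e11 \<and> e12)"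
  shows "False"
proof -
  have "(5::int) \<le> int ((if e1 then 1 else 0) + ((if e2 then 1 else 0) + ((if e3 then 1 else 0) + ((if e4 then 1 else 0) + ((if e5 then 1 else 0) + ((if e6 then 1 else 0) + ((if e7 then 1 else 0) + ((if e8 then 1 else 0) + ((if e9 then 1 else 0) + ((if e10 then 1 else 0) + ((if e11 then 1 else 0) + ((if e12 then 1 else (0::nat))))))))))))))" using assms(1) by linarith
  then have "(5::int) \<le> (if e1 then 1 else 0) + ((if e2 then 1 else 0) + ((if e3 then 1 else 0) + ((if e4 then 1 else 0) + ((if e5 then 1 else 0) + ((if e6 then 1 else 0) + ((if e7 then 1 else 0) + ((if e8 then 1 else 0) + ((if e9 then 1 else 0) + ((if e10 then 1 else 0) + ((if e11 then 1 else 0) + ((if e12 then 1 else (0::int)))))))))))))" by (simp only: of_nat_add int_ite)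
  from A12_int[OF this assms(2-)] show ?thesis .
qed

lemma B12_int:
  fixes e1 e2 e3 e4 e5 e6 e7 e8 e9 e10 e11 e12 :: bool
  assumes "5 \<le> (if e1 then 1 else 0) + ((if e2 then 1 else 0) + ((if e3 then 1 else 0) + ((if e4 then 1 else 0) + ((if e5 then 1 else 0) + ((if e6 then 1 else 0) + ((if e7 then 1 else 0) + ((if e8 then 1 else 0) + ((if e9 then 1 else 0) + ((if e10 then 1 else 0) + ((if e11 then 1 else 0) + ((if e12 then 1 else (0::int)))))))))))))"
   "\<not> (e2 \<and> e1)" "\<not> (e3 \<and> e1)" "\<not> (e4 \<and> e1)" "\<not> (e5 \<and> e1)" "\<not> (e2 \<and> e7)" "\<not> (e2 \<and> e8)" "\<not> (e3 \<and> e8)" "\<not> (e3 \<and> e9)" "\<not> (e4 \<and> e9)" "\<not> (e4 \<and> e6)" "\<not> (e5 \<and> e7)" "\<not> (e6 \<and> e7)" "\<not> (e7 \<and> e9)" "\<not> (e8 \<and> e6)" "\<not> (e10 \<and> e3)" "\<not> (e10 \<and> e5)" "\<not> (e10 \<and> e11)" "\<not> (e11 \<and> e2)" "\<not> (e5 \<and> e12)" "\<not> (e8 \<and> e12)" "\<not> (e9 \<and> e12)" "\<not> (e11 \<and> e12)"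
  shows "False"
  using assms by (smt (z3))

lemma B12:
  fixes e1 e2 e3 e4 e5 e6 e7 e8 e9 e10 e11 e12 :: bool
  assumes "5 \<le> (if e1 then 1 else 0) + ((if e2 then 1 else 0) + ((if e3 then 1 else 0) + ((if e4 then 1 else 0) + ((if e5 then 1 else 0) + ((if e6 then 1 else 0) + ((if e7 then 1 else 0) + ((if e8 then 1 else 0) + ((if e9 then 1 else 0) + ((if e10 then 1 else 0) + ((if e11 then 1 else 0) + ((if e12 then 1 else (0::nat)))))))))))))"
   "\<not> (e2 \<and> e1)" "\<not> (e3 \<and> e1)" "\<not> (e4 \<and> e1)" "\<not> (e5 \<and> e1)" "\<not> (e2 \<and> e7)" "\<not> (e2 \<and> e8)" "\<not> (e3 \<and> e8)" "\<not> (e3 \<and> e9)" "\<not> (e4 \<and> e9)" "\<not> (e4 \<and> e6)" "\<not> (e5 \<and> e7)" "\<not> (e6 \<and> e7)" "\<not> (e7 \<and> e9)" "\<not> (e8 \<and> e6)" "\<not> (e10 \<and> e3)" "\<not> (e10 \<and> e5)" "\<not> (e10 \<and> e11)" "\<not> (e11 \<and> e2)" "\<not> (e5 \<and> e12)" "\<not> (e8 \<and> e12)" "\<not> (e9 \<and> e12)" "\<not> (e11 \<and> e12)"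
  shows "False"
proof -
  have "(5::int) \<le> int ((if e1 then 1 else 0) + ((if e2 then 1 else 0) + ((if e3 then 1 else 0) + ((if e4 then 1 else 0) + ((if e5 then 1 else 0) + ((if e6 then 1 else 0) + ((if e7 then 1 else 0) + ((if e8 then 1 else 0) + ((if e9 then 1 else 0) + ((if e10 then 1 else 0) + ((if e11 then 1 else 0) + ((if e12 then 1 else (0::nat))))))))))))))" using assms(1) by linarith
  then have "(5::int) \<le> (if e1 then 1 else 0) + ((if e2 then 1 else 0) + ((if e3 then 1 else 0) + ((if e4 then 1 else 0) + ((if e5 then 1 else 0) + ((if e6 then 1 else 0) + ((if e7 then 1 else 0) + ((if e8 then 1 else 0) + ((if e9 then 1 else 0) + ((if e10 then 1 else 0) + ((if e11 then 1 else 0) + ((if e12 then 1 else (0::int)))))))))))))" by (simp only: of_nat_add int_ite)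
  from B12_int[OF this assms(2-)] show ?thesis .
qed

lemma len_filter_sum: "length (filter P xs) = (\<Sum>u\<leftarrow>xs. if P u then 1 else (0::nat))"
  by (induction xs) auto

lemma D_use:
  assumes pD: "property_D 4 V E" and m1: "1 \<le> m" and m4: "m \<le> 4"
    and len: "length xs = 3*m" and sub: "set xs \<subseteq> V"
  shows "\<exists>y\<in>V. m+1 \<le> (\<Sum>u\<leftarrow>xs. if E u y then 1 else (0::nat))"
proof -
  define x where "x = (\<lambda>k::nat. xs ! (k - 1))"
  have xV: "\<forall>k\<in>{1..3*m}. x k \<in> V"
  proof
    fix k assume "k \<in> {1..3*m}"
    then have "k - 1 < length xs" using len by auto
    then show "x k \<in> V" unfolding x_def using sub nth_mem by blast
  qed
  have "m \<in> {1..4}" using m1 m4 by auto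
  then obtain y where yV: "y \<in> V" and cy: "card {k \<in> {1..3*m}. E (x k) y} \<ge> m + 1"
    using pD xV unfolding property_D_def by blast
  have eq: "{k \<in> {1..3*m}. E (x k) y} = Suc ` {j. j < length xs \<and> E (xs ! j) y}"
  proof (rule set_eqI, rule iffI)
    fix k assume "k \<in> {k \<in> {1..3*m}. E (x k) y}"
    then have "k \<ge> 1" "k \<le> 3*m" "E (xs ! (k-1)) y" unfolding x_def by auto
    then show "k \<in> Suc ` {j. j < length xs \<and> E (xs ! j) y}" using len
      by (metis (mono_tags, lifting) Suc_diff_1 Suc_le_lessD diff_less image_eqI le_neq_implies_less
          less_numeral_extra(1) mem_Collect_eq order_less_le_trans zero_less_one)
  next
    fix k assume "k \<in> Suc ` {j. j < length xs \<and> E (xs ! j) y}"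
    then obtain j where "k = Suc j" "j < length xs" "E (xs ! j) y" by auto
    then show "k \<in> {k \<in> {1..3*m}. E (x k) y}" using len unfolding x_def by auto
  qed
  have "card {k \<in> {1..3*m}. E (x k) y} = card {j. j < length xs \<and> E (xs ! j) y}"
    unfolding eq by (rule card_image) simp
  also have "\<dots> = length (filter (\<lambda>u. E u y) xs)" by (simp add: length_filter_conv_card)
  finally show ?thesis using yV cy len_filter_sum by metis
qed

theorem mainTheorem13:
  fixes V :: "'v set" and E :: "'v \<Rightarrow> 'v \<Rightarrow> bool"
    and a b :: "5 \<Rightarrow> 'v" and c q :: 'v and i :: 5
  assumes "in_frak_D4 V E"
    and "mycielski_copy V E a b c"
    and "q \<in> V"
    and "E q (a (i - 1))" and "E q (a (i + 1))"
  shows "E q (a i)"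
proof (rule ccontr)
  assume nq: "\<not> E q (a i)"
  have mtf: "maximal_triangle_free V E" and pD: "property_D 4 V E"
    using assms(1) unfolding in_frak_D4_def by auto
  have sg: "simple_graph V E" and tf: "triangle_free V E"
    and mx: "\<forall>x\<in>V. \<forall>y\<in>V. x \<noteq> y \<and> \<not> E x y \<longrightarrow> (\<exists>z\<in>V. E x z \<and> E z y)"
    using mtf unfolding maximal_triangle_free_def by auto
  have memV: "\<And>x y. E x y \<Longrightarrow> x \<in> V \<and> y \<in> V" using sg unfolding simple_graph_def by auto
  have tri: "\<And>u v w. E u v \<Longrightarrow> E u w \<Longrightarrow> E v w \<Longrightarrow> False"
    using tf memV unfolding triangle_free_def by blast
  have excl: "\<And>u v y. E u v \<Longrightarrow> \<not> (E u y \<and> E v y)" using tri by blast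
  have mc: "range a \<subseteq> V" "range b \<subseteq> V" "c \<in> V"
    "\<forall>j. E (a j) c \<and> E (a j) (b (j + 2)) \<and> E (a j) (b (j - 2)) \<and> E (b j) (b (j + 2))"
    using assms(2) unfolding mycielski_copy_def by auto
  have aV: "\<And>j. a j \<in> V" and bV: "\<And>j. b j \<in> V" using mc by auto
  have Gc: "\<And>j. E (a j) c" and Gp: "\<And>j. E (a j) (b (j + 2))" and Gm: "\<And>j. E (a j) (b (j - 2))"
    and Gb: "\<And>j. E (b j) (b (j + 2))" using mc(4) by auto
  have ca0: "E (a i) c" and ca1: "E (a (i+1)) c" and ca2: "E (a (i+2)) c"
    and ca3: "E (a (i-2)) c" and ca4: "E (a (i-1)) c" using Gc by auto
  have a0b2: "E (a i) (b (i+2))" using Gp by auto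
  have a0b3: "E (a i) (b (i-2))" using Gm by auto
  have a1b3: "E (a (i+1)) (b (i-2))"
  proof - have e: "i+1+2 = i-2" by simp show ?thesis using Gp[of "i+1"] unfolding e . qed
  have a1b4: "E (a (i+1)) (b (i-1))"
  proof - have e: "i+1-2 = i-1" by simp show ?thesis using Gm[of "i+1"] unfolding e . qed
  have a2b4: "E (a (i+2)) (b (i-1))"
  proof - have e: "i+2+2 = i-1" by simp show ?thesis using Gp[of "i+2"] unfolding e . qed
  have a2b0: "E (a (i+2)) (b i)"
  proof - have e: "i+2-2 = i" by simp show ?thesis using Gm[of "i+2"] unfolding e . qed
  have a3b0: "E (a (i-2)) (b i)"
  proof - have e: "i-2+2 = i" by simp show ?thesis using Gp[of "i-2"] unfolding e . qed
  have a3b1: "E (a (i-2)) (b (i+1))"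
  proof - have e: "i-2-2 = i+1" by simp show ?thesis using Gm[of "i-2"] unfolding e . qed
  have a4b1: "E (a (i-1)) (b (i+1))"
  proof - have e: "i-1+2 = i+1" by simp show ?thesis using Gp[of "i-1"] unfolding e . qed
  have a4b2: "E (a (i-1)) (b (i+2))"
  proof - have e: "i-1-2 = i+2" by simp show ?thesis using Gm[of "i-1"] unfolding e . qed
  have b0b2: "E (b i) (b (i+2))" using Gb by auto
  have b1b3: "E (b (i+1)) (b (i-2))"
  proof - have e: "i+1+2 = i-2" by simp show ?thesis using Gb[of "i+1"] unfolding e . qed
  have b2b4: "E (b (i+2)) (b (i-1))"
  proof - have e: "i+2+2 = i-1" by simp show ?thesis using Gb[of "i+2"] unfolding e . qed
  have b3b0: "E (b (i-2)) (b i)"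
  proof - have e: "i-2+2 = i" by simp show ?thesis using Gb[of "i-2"] unfolding e . qed
  have b4b1: "E (b (i-1)) (b (i+1))"
  proof - have e: "i-1+2 = i+1" by simp show ?thesis using Gb[of "i-1"] unfolding e . qed
  have qa1: "E q (a (i+1))" and qa4: "E q (a (i-1))" using assms(4,5) by auto
  have "q \<noteq> a i"
  proof
    assume "q = a i"
    then have "E (a i) (a (i-1))" using qa4 by simp
    then show False using tri ca0 ca4 by blast
  qed
  then obtain z where zV: "z \<in> V" and qz: "E q z" and za0: "E z (a i)"
    using mx assms(3) aV nq by blast
  have "\<exists>y\<in>V. 3+1 \<le> (\<Sum>u\<leftarrow>[a i, a (i+1), a (i-1), b (i+1), b (i+2), b (i-2), b (i-1), q, z].
          if E u y then 1 else (0::nat))"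
    by (rule D_use[OF pD]) (use aV bV zV assms(3) in auto)
  then obtain y where yV: "y \<in> V" and y4: "3+1 \<le> (\<Sum>u\<leftarrow>[a i, a (i+1), a (i-1), b (i+1), b (i+2), b (i-2), b (i-1), q, z].
          if E u y then 1 else (0::nat))" by blast
  have yAB: "(E (a (i+1)) y \<and> E (b (i+1)) y \<and> E (b (i+2)) y \<and> E z y) \<or>
             (E (a (i-1)) y \<and> E (b (i-2)) y \<and> E (b (i-1)) y \<and> E z y)"
  proof -
    note ex = excl[OF a0b2, of y] excl[OF a0b3, of y] excl[OF a1b3, of y] excl[OF a1b4, of y]
      excl[OF a4b1, of y] excl[OF a4b2, of y] excl[OF b1b3, of y] excl[OF b2b4, of y]
      excl[OF b4b1, of y] excl[OF qa1, of y] excl[OF qa4, of y] excl[OF qz, of y] excl[OF za0, of y]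
    show ?thesis by (rule M9[OF _ ex]) (use y4 in simp)
  qed
  then show False
  proof
    assume A: "E (a (i+1)) y \<and> E (b (i+1)) y \<and> E (b (i+2)) y \<and> E z y"
    then have A1: "E (a (i+1)) y" and A2: "E (b (i+1)) y" and A3: "E (b (i+2)) y" and A4: "E z y" by auto
    have "\<exists>y'\<in>V. 4+1 \<le> (\<Sum>u\<leftarrow>[c, a i, a (i+1), a (i-2), a (i-1), b i, b (i+1), b (i+2), b (i-2), q, z, y].
          if E u y' then 1 else (0::nat))"
      by (rule D_use[OF pD]) (use aV bV zV yV mc(3) assms(3) in auto)
    then obtain y' where y5: "4+1 \<le> (\<Sum>u\<leftarrow>[c, a i, a (i+1), a (i-2), a (i-1), b i, b (i+1), b (i+2), b (i-2), q, z, y].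
          if E u y' then 1 else (0::nat))" by blast
    note ex = excl[OF ca0, of y'] excl[OF ca1, of y'] excl[OF ca3, of y'] excl[OF ca4, of y']
      excl[OF a0b2, of y'] excl[OF a0b3, of y'] excl[OF a1b3, of y'] excl[OF a3b0, of y']
      excl[OF a3b1, of y'] excl[OF a4b1, of y'] excl[OF a4b2, of y'] excl[OF b0b2, of y']
      excl[OF b1b3, of y'] excl[OF b3b0, of y'] excl[OF qa1, of y'] excl[OF qa4, of y']
      excl[OF qz, of y'] excl[OF za0, of y']
      excl[OF A1, of y'] excl[OF A2, of y'] excl[OF A3, of y'] excl[OF A4, of y']
    show False by (rule A12[OF _ ex]) (use y5 in simp)
  next
    assume B: "E (a (i-1)) y \<and> E (b (i-2)) y \<and> E (b (i-1)) y \<and> E z y"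
    then have B1: "E (a (i-1)) y" and B2: "E (b (i-2)) y" and B3: "E (b (i-1)) y" and B4: "E z y" by auto
    have "\<exists>y'\<in>V. 4+1 \<le> (\<Sum>u\<leftarrow>[c, a i, a (i+1), a (i+2), a (i-1), b i, b (i+2), b (i-2), b (i-1), q, z, y].
          if E u y' then 1 else (0::nat))"
      by (rule D_use[OF pD]) (use aV bV zV yV mc(3) assms(3) in auto)
    then obtain y' where y5: "4+1 \<le> (\<Sum>u\<leftarrow>[c, a i, a (i+1), a (i+2), a (i-1), b i, b (i+2), b (i-2), b (i-1), q, z, y].
          if E u y' then 1 else (0::nat))" by blast
    note ex = excl[OF ca0, of y'] excl[OF ca1, of y'] excl[OF ca2, of y'] excl[OF ca4, of y']
      excl[OF a0b2, of y'] excl[OF a0b3, of y'] excl[OF a1b3, of y'] excl[OF a1b4, of y']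
      excl[OF a2b4, of y'] excl[OF a2b0, of y'] excl[OF a4b2, of y'] excl[OF b0b2, of y']
      excl[OF b2b4, of y'] excl[OF b3b0, of y'] excl[OF qa1, of y'] excl[OF qa4, of y']
      excl[OF qz, of y'] excl[OF za0, of y']
      excl[OF B1, of y'] excl[OF B2, of y'] excl[OF B3, of y'] excl[OF B4, of y']
    show False by (rule B12[OF _ ex]) (use y5 in simp)
  qed
qed

end
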